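(* Let $\lambda\in\mathbf R$, $\mu>0$, and let $\psi\in H(\mathbf R)$ satisfy $1-\psi(x)\sim Ce^{\nu x}$ as $x\to-\infty$ for some $C>0,\nu>0$. Let $u$ be the weak solution of $u_t=-\lambda u_x+\mu(u^2-u)$, $u(0,\cdot)=\psi$, namely $u(t,x)=\frac{\psi(x-\lambda t)e^{-\mu t}}{1-\psi(x-\lambda t)+\psi(x-\lambda t)e^{-\mu t}}$. Put $v=\lambda-\mu/\nu$ and $w_v(x)=\big(1+\exp(\frac{\mu}{\lambda-v}x)\big)^{-1}$. Then there exists $x_0\in\mathbf R$ such that for every $x\in\mathbf R$, $$|u(t,x)-w_v(x-x_0-vt)|\to0\quad(t\to\infty).$$
   Context: $H(\mathbf R)$ is the set of nonincreasing right-continuous functions $h:\mathbf R\to[0,1]$ with $h(-\infty)=1$, $h(+\infty)=0$. *)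

theory Defs
  imports "HOL-Analysis.Analysis" "HOL-Library.Landau_Symbols"
begin

definition H_R :: "(real \<Rightarrow> real) set" where
  "H_R = {h. antimono h
            \<and> (\<forall>x. continuous (at_right x) h)
            \<and> (\<forall>x. 0 \<le> h x \<and> h x \<le> 1)
            \<and> (h \<longlongrightarrow> 1) at_bot
            \<and> (h \<longlongrightarrow> 0) at_top}"

definition weak_sol :: "real \<Rightarrow> real \<Rightarrow> (real \<Rightarrow> real) \<Rightarrow> real \<Rightarrow> real \<Rightarrow> real" where
  "weak_sol lam mu psi t x =
     psi (x - lam * t) * exp (- mu * t) /
     (1 - psi (x - lam * t) + psi (x - lam * t) * exp (- mu * t))"

definition wave :: "real \<Rightarrow> real \<Rightarrow> real \<Rightarrow> real \<Rightarrow> real" where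
  "wave lam mu v x = 1 / (1 + exp (mu / (lam - v) * x))"

end

theory Submission
  imports Defs "HOL-Real_Asymp.Real_Asymp"
begin

lemma alg:
  fixes p r c E :: real
  assumes "1/2 \<le> p" "p \<le> 1" "1/2 \<le> r" "c > 0" "E > 0" "1 - p = r * c"
  shows "\<bar>p * E / (1 - p + p * E) - 1 / (1 + c / E)\<bar> \<le> 2 * \<bar>p - r\<bar>"
proof -
  have d1: "r*c + p*E > 0" using assms by (simp add: add_pos_pos)
  have "r*c \<ge> c/2" "p*E \<ge> E/2" using assms mult_right_mono by fastforce+
  then have d1': "r*c + p*E \<ge> (c+E)/2" by simp
  have e: "1 / (1 + c / E) = E / (E + c)" using assms by (simp add: field_simps)
  have d2: "E + c > 0" using assms by simp
  have "p * E / (1 - p + p * E) - 1 / (1 + c / E) = p * E / (r*c + p*E) - E / (E + c)"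
    using assms e by simp
  also have "\<dots> = (p*E*(E+c) - E*(r*c+p*E)) / ((r*c + p*E) * (E + c))"
    using d1 d2 by (simp add: diff_frac_eq)
  also have "p*E*(E+c) - E*(r*c+p*E) = E * c * (p - r)" by (simp add: algebra_simps)
  finally have eq: "p * E / (1 - p + p * E) - 1 / (1 + c / E) = E * c * (p - r) / ((r*c + p*E) * (E + c))" .
  have "\<bar>E * c * (p - r) / ((r*c + p*E) * (E + c))\<bar> = E * c * \<bar>p - r\<bar> / ((r*c + p*E) * (E + c))"
    using d1 d2 assms by (simp add: abs_mult abs_divide)
  also have "\<dots> \<le> E * c * \<bar>p - r\<bar> / ((c+E)/2 * (E + c))"
    using d1' assms d2 by (intro divide_left_mono mult_right_mono mult_pos_pos) auto
  also have "\<dots> = (2 * (E * c) / ((c+E) * (E + c))) * \<bar>p - r\<bar>" by simp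
  also have "\<dots> \<le> 1 * \<bar>p - r\<bar>"
  proof (rule mult_right_mono)
    have "2 * (E * c) \<le> (c+E) * (E+c)" by (simp add: algebra_simps)
    then show "2 * (E * c) / ((c+E) * (E + c)) \<le> 1" using d2 by (simp add: divide_le_eq)
  qed simp
  finally have "\<bar>E * c * (p - r) / ((r*c + p*E) * (E + c))\<bar> \<le> 1 * \<bar>p - r\<bar>" .
  then show ?thesis unfolding eq using abs_ge_zero[of "p - r"] by linarith
qed

lemma wave_eq:
  fixes lam mu nu C x t :: real
  assumes "mu > 0" "nu > 0" "C > 0"
  shows "wave lam mu (lam - mu / nu) (x - (- ln C / nu) - (lam - mu / nu) * t)
       = 1 / (1 + C * exp (nu * (x - lam * t)) / exp (- mu * t))"
proof -
  have k: "mu / (lam - (lam - mu / nu)) = nu" using assms by simp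
  have "nu * (x - (- ln C / nu) - (lam - mu / nu) * t) = ln C + nu * (x - lam * t) + mu * t"
    using assms by (simp add: field_simps)
  then have "exp (nu * (x - (- ln C / nu) - (lam - mu / nu) * t)) = C * exp (nu * (x - lam * t)) / exp (- mu * t)"
    using assms by (simp add: exp_add exp_minus divide_inverse)
  then show ?thesis unfolding wave_def k by simp
qed

theorem mainTheorem11:
  fixes lam mu C nu :: real and psi :: "real \<Rightarrow> real"
  assumes "mu > 0" and "psi \<in> H_R" and "C > 0" and "nu > 0"
    and "(\<lambda>x. 1 - psi x) \<sim>[at_bot] (\<lambda>x. C * exp (nu * x))"
  shows "\<exists>x0::real. \<forall>x::real.
     ((\<lambda>t. \<bar>weak_sol lam mu psi t x - wave lam mu (lam - mu / nu) (x - x0 - (lam - mu / nu) * t)\<bar>)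
        \<longlongrightarrow> 0) at_top"
proof (intro exI allI)
  fix x :: real
  have am: "antimono psi" and b01: "\<And>y. 0 \<le> psi y \<and> psi y \<le> 1"
    and p1: "(psi \<longlongrightarrow> 1) at_bot"
    using assms(2) unfolding H_R_def by auto
  define R where "R y = (1 - psi y) / (C * exp (nu * y))" for y
  have cne: "C * exp (nu * y) \<noteq> 0" for y using assms(3) by simp
  have R1: "(R \<longlongrightarrow> 1) at_bot"
    using asymp_equivD[OF assms(5)] cne unfolding R_def by simp
  have "eventually (\<lambda>y. R y > 1/2) at_bot"
    using R1 by (rule order_tendstoD) simp
  then obtain N where N: "\<And>y. y \<le> N \<Longrightarrow> R y > 1/2" by (auto simp: eventually_at_bot_linorder)
  have lt1: "psi y < 1" for y
  proof (cases "y \<le> N")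
    case True
    then have "R y > 0" using N by force
    then show ?thesis using assms(3,4) unfolding R_def by (auto simp add: zero_less_divide_iff mult_less_0_iff)
  next
    case False
    have "R N > 0" using N by force
    then have "psi N < 1" using assms(3,4) unfolding R_def by (auto simp add: zero_less_divide_iff mult_less_0_iff)
    moreover have "psi y \<le> psi N" using am False unfolding antimono_def by simp
    ultimately show ?thesis by simp
  qed
  define W where "W t = wave lam mu (lam - mu / nu) (x - (- ln C / nu) - (lam - mu / nu) * t)" for t
  have W: "W t = 1 / (1 + C * exp (nu * (x - lam * t)) / exp (- mu * t))" for t
    unfolding W_def using wave_eq assms(1,3,4) by blast
  show "((\<lambda>t. \<bar>weak_sol lam mu psi t x - W t\<bar>) \<longlongrightarrow> 0) at_top"
  proof (cases "lam > 0")
    case True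
    have yl: "filterlim (\<lambda>t. x - lam * t) at_bot at_top" using True by real_asymp
    have P1: "((\<lambda>t. psi (x - lam * t)) \<longlongrightarrow> 1) at_top" by (rule filterlim_compose[OF p1 yl])
    have Q1: "((\<lambda>t. R (x - lam * t)) \<longlongrightarrow> 1) at_top" by (rule filterlim_compose[OF R1 yl])
    have "eventually (\<lambda>t. psi (x - lam * t) > 1/2) at_top" using P1 by (rule order_tendstoD) simp
    moreover have "eventually (\<lambda>t. R (x - lam * t) > 1/2) at_top" using Q1 by (rule order_tendstoD) simp
    ultimately have ev: "eventually (\<lambda>t. norm (\<bar>weak_sol lam mu psi t x - W t\<bar>)
         \<le> 2 * \<bar>psi (x - lam * t) - R (x - lam * t)\<bar>) at_top"
    proof eventually_elim
      case (elim t)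
      let ?p = "psi (x - lam * t)" and ?r = "R (x - lam * t)" and ?c = "C * exp (nu * (x - lam * t))"
      have "1 - ?p = ?r * ?c" unfolding R_def using cne by simp
      from alg[OF _ _ _ _ _ this, of "exp (- mu * t)"] elim b01[of "x - lam*t"] assms(3)
      show ?case unfolding weak_sol_def W by simp
    qed
    have "((\<lambda>t. 2 * \<bar>psi (x - lam * t) - R (x - lam * t)\<bar>) \<longlongrightarrow> 2 * \<bar>1 - 1\<bar>) at_top"
      by (intro tendsto_intros P1 Q1)
    then have "((\<lambda>t. 2 * \<bar>psi (x - lam * t) - R (x - lam * t)\<bar>) \<longlongrightarrow> 0) at_top" by simp
    from Lim_null_comparison[OF ev this] show ?thesis .
  next
    case False
    have Wt: "filterlim (\<lambda>t. nu * (x - (- ln C / nu)) + (mu - nu * lam) * t) at_top at_top"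
    proof -
      have "mu - nu * lam > 0" using False assms(1,4) by (smt (verit) mult_nonneg_nonpos)
      then show ?thesis by real_asymp
    qed
    have Weq: "W t = 1 / (1 + exp (nu * (x - (- ln C / nu)) + (mu - nu * lam) * t))" for t
    proof -
      have "nu * (x - (- ln C / nu) - (lam - mu / nu) * t) = nu * (x - (- ln C / nu)) + (mu - nu * lam) * t"
        using assms(4) by (simp add: field_simps)
      moreover have "mu / (lam - (lam - mu / nu)) = nu" using assms by simp
      ultimately show ?thesis unfolding W_def wave_def by simp
    qed
    have "filterlim (\<lambda>t. exp (nu * (x - (- ln C / nu)) + (mu - nu * lam) * t)) at_top at_top"
      by (rule filterlim_compose[OF exp_at_top Wt])
    then have "filterlim (\<lambda>t. 1 + exp (nu * (x - (- ln C / nu)) + (mu - nu * lam) * t)) at_top at_top"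
      by (rule filterlim_tendsto_add_at_top[OF tendsto_const])
    then have W0: "(W \<longlongrightarrow> 0) at_top"
      unfolding Weq using tendsto_inverse_0_at_top by (simp add: inverse_eq_divide) blast
    have E0: "((\<lambda>t. exp (- mu * t) / (1 - psi x)) \<longlongrightarrow> 0) at_top"
    proof -
      have "((\<lambda>t. exp (- mu * t)) \<longlongrightarrow> 0) at_top" using assms(1) by real_asymp
      from tendsto_divide_zero[OF this] show ?thesis .
    qed
    have px: "1 - psi x > 0" using lt1[of x] by simp
    have "eventually (\<lambda>t. 0 \<le> weak_sol lam mu psi t x \<and> weak_sol lam mu psi t x \<le> exp (- mu * t) / (1 - psi x)) at_top"
      using eventually_ge_at_top[of 0]
    proof eventually_elim
      case (elim t)
      let ?p = "psi (x - lam * t)" and ?E = "exp (- mu * t)"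
      have "x - lam * t \<ge> x" using elim False by (simp add: mult_nonpos_nonneg)
      then have pp: "?p \<le> psi x" using am unfolding antimono_def by blast
      have d: "1 - ?p > 0" using lt1 by simp
      have p0: "0 \<le> ?p" using b01 by blast
      have "?p * ?E / (1 - ?p + ?p * ?E) \<le> ?p * ?E / (1 - ?p)"
        using d p0 by (intro divide_left_mono) (auto intro!: mult_pos_pos add_pos_nonneg)
      also have "\<dots> \<le> ?E / (1 - ?p)"
        using d b01 by (intro divide_right_mono) (auto simp: mult_left_le_one_le)
      also have "\<dots> \<le> ?E / (1 - psi x)"
        using d px pp by (intro divide_left_mono) auto
      finally show ?case using d p0 unfolding weak_sol_def by (auto intro!: divide_nonneg_pos add_pos_nonneg)
    qed
    then have U0: "((\<lambda>t. weak_sol lam mu psi t x) \<longlongrightarrow> 0) at_top"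
      by (intro tendsto_sandwich[OF _ _ tendsto_const E0]) (auto elim: eventually_mono)
    have "((\<lambda>t. \<bar>weak_sol lam mu psi t x - W t\<bar>) \<longlongrightarrow> \<bar>0 - 0\<bar>) at_top"
      by (intro tendsto_intros U0 W0)
    then show ?thesis by simp
  qed
qed

end
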